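(* Let $n\ge1$ be an integer, $I,\Lambda$ non-empty sets, $P$ a $\Lambda\times I$ matrix with entries in $\mathbb{Z}_{n}\cup\{\mathbf{0}\}$, and $S=M^{0}[\mathbb{Z}_{n};I,\Lambda;P]$. Let $A$ be a finite alphabet, $\varphi:A\to S$ any map, and $\bar\varphi:A^{+}\to S$ its unique extension to a semigroup morphism. Then the language $\mathbf{0}\bar\varphi^{-1}\subseteq A^{+}$ has generalised star-height $0$.
   Context: $\mathbb{Z}_n$ is the cyclic group of order $n$ written additively. For a group $G$, non-empty sets $I,\Lambda$ and a $\Lambda\times I$ matrix $P=(p_{\lambda i})$ with entries in $G\cup\{\mathbf{0}\}$ ($\mathbf{0}$ a new symbol), the Rees zero-matrix semigroup $M^{0}[G;I,\Lambda;P]$ is $(I\times G\times\Lambda)\cup\{\mathbf{0}\}$ with $(i,g,\lambda)(j,h,\mu)=(i,g\,p_{\lambda j}\,h,\mu)$ if $p_{\lambda j}\ne\mathbf{0}$, $=\mathbf{0}$ if $p_{\lambda j}=\mathbf{0}$, and $x\mathbf{0}=\mathbf{0}x=\mathbf{0}$. Generalised regular expressions over $A$: $\emptyset$, $\varepsilon$ and each letter are expressions; if $E,F$ are expressions so are $E\cup F$, $EF$, $E^{\ast}$, $E^{c}$ (complement in $A^{\ast}$). Star-height: $h(\emptyset)=h(\varepsilon)=h(a)=0$, $h(E\cup F)=h(EF)=\max\{h(E),h(F)\}$, $h(E^{\ast})=h(E)+1$, $h(E^{c})=h(E)$; the star-height of a language is the minimum of $h(E)$ over expressions $E$ representing it.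 *)

theory Defs
  imports Main
begin

text \<open>Z_n is represented by the naturals {0..<n} with addition modulo n.
  An element of M0[Z_n; I, Lambda; P] is either None (the zero 0) or
  Some (i, g, lam) with i in I, g < n, lam in Lambda.
  The sandwich matrix P maps (lam, i) to None (the symbol 0) or Some g with g < n.\<close>

type_synonym ('i, 'l) rees_elt = "('i \<times> nat \<times> 'l) option"

definition rees_carrier :: "nat \<Rightarrow> 'i set \<Rightarrow> 'l set \<Rightarrow> ('i, 'l) rees_elt set" where
  "rees_carrier n I L = {None} \<union> Some ` (I \<times> {..<n} \<times> L)"

fun rees_mult :: "nat \<Rightarrow> ('l \<Rightarrow> 'i \<Rightarrow> nat option) \<Rightarrow>
    ('i, 'l) rees_elt \<Rightarrow> ('i, 'l) rees_elt \<Rightarrow> ('i, 'l) rees_elt" where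
  "rees_mult n P (Some (i, g, lam)) (Some (j, h, mu)) =
     (case P lam j of
        None \<Rightarrow> None
      | Some p \<Rightarrow> Some (i, (g + p + h) mod n, mu))"
| "rees_mult n P _ _ = None"

definition sandwich_ok :: "nat \<Rightarrow> 'i set \<Rightarrow> 'l set \<Rightarrow> ('l \<Rightarrow> 'i \<Rightarrow> nat option) \<Rightarrow> bool" where
  "sandwich_ok n I L P \<longleftrightarrow> (\<forall>lam\<in>L. \<forall>i\<in>I. \<forall>g. P lam i = Some g \<longrightarrow> g < n)"

text \<open>The unique extension of phi : A -> S to a semigroup morphism A^+ -> S,
  evaluated on non-empty words (the value on [] is irrelevant and fixed to None).\<close>

fun word_eval :: "nat \<Rightarrow> ('l \<Rightarrow> 'i \<Rightarrow> nat option) \<Rightarrow> ('a \<Rightarrow> ('i, 'l) rees_elt) \<Rightarrow>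
    'a list \<Rightarrow> ('i, 'l) rees_elt" where
  "word_eval n P phi [] = None"
| "word_eval n P phi (a # w) = foldl (rees_mult n P) (phi a) (map phi w)"

datatype 'a gre =
    GEmpty
  | GEps
  | GLetter 'a
  | GUnion "'a gre" "'a gre"
  | GConc "'a gre" "'a gre"
  | GStar "'a gre"
  | GCompl "'a gre"

fun gre_over :: "'a set \<Rightarrow> 'a gre \<Rightarrow> bool" where
  "gre_over A GEmpty = True"
| "gre_over A GEps = True"
| "gre_over A (GLetter a) = (a \<in> A)"
| "gre_over A (GUnion E F) = (gre_over A E \<and> gre_over A F)"
| "gre_over A (GConc E F) = (gre_over A E \<and> gre_over A F)"
| "gre_over A (GStar E) = gre_over A E"
| "gre_over A (GCompl E) = gre_over A E"

definition lang_conc :: "'a list set \<Rightarrow> 'a list set \<Rightarrow> 'a list set" where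
  "lang_conc X Y = {u @ v | u v. u \<in> X \<and> v \<in> Y}"

inductive_set lang_star :: "'a list set \<Rightarrow> 'a list set" for X where
  star_nil: "[] \<in> lang_star X"
| star_app: "u \<in> X \<Longrightarrow> v \<in> lang_star X \<Longrightarrow> u @ v \<in> lang_star X"

text \<open>Language of an expression over alphabet A; complement is taken in A^*.\<close>

fun gre_lang :: "'a set \<Rightarrow> 'a gre \<Rightarrow> 'a list set" where
  "gre_lang A GEmpty = {}"
| "gre_lang A GEps = {[]}"
| "gre_lang A (GLetter a) = {[a]}"
| "gre_lang A (GUnion E F) = gre_lang A E \<union> gre_lang A F"
| "gre_lang A (GConc E F) = lang_conc (gre_lang A E) (gre_lang A F)"
| "gre_lang A (GStar E) = lang_star (gre_lang A E)"
| "gre_lang A (GCompl E) = lists A - gre_lang A E"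

fun star_height :: "'a gre \<Rightarrow> nat" where
  "star_height GEmpty = 0"
| "star_height GEps = 0"
| "star_height (GLetter a) = 0"
| "star_height (GUnion E F) = max (star_height E) (star_height F)"
| "star_height (GConc E F) = max (star_height E) (star_height F)"
| "star_height (GStar E) = star_height E + 1"
| "star_height (GCompl E) = star_height E"

definition lang_star_height :: "'a set \<Rightarrow> 'a list set \<Rightarrow> nat" where
  "lang_star_height A L = (LEAST h. \<exists>E. gre_over A E \<and> gre_lang A E = L \<and> star_height E = h)"

end

theory Submission
  imports Defs
begin

lemma eval_snoc:
  "w \<noteq> [] \<Longrightarrow> word_eval n P phi (w @ [b]) = rees_mult n P (word_eval n P phi w) (phi b)"
  by (cases w) auto

lemma mult_some_right:
  "rees_mult n P x y = Some (i, g, l) \<Longrightarrow> \<exists>i' g'. y = Some (i', g', l)"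
  by (cases "(n,P,x,y)" rule: rees_mult.cases) (auto split: option.splits)

lemma mult_none_left[simp]: "rees_mult n P None y = None"
  by simp

lemma mult_none_right[simp]: "rees_mult n P x None = None"
  by (cases "(n,P,x,None::('a,'b) rees_elt)" rule: rees_mult.cases) auto

lemma mult_step:
  "rees_mult n P (Some (i, g, l)) z = None \<longleftrightarrow> rees_mult n P (Some (i', g', l)) z = None"
  by (cases z) (auto split: option.splits)

lemma eval_last:
  "w \<noteq> [] \<Longrightarrow> word_eval n P phi w = Some (i, g, l) \<Longrightarrow> \<exists>i' g'. phi (last w) = Some (i', g', l)"
proof (induction w arbitrary: i g l rule: rev_induct)
  case Nil then show ?case by simp
next
  case (snoc b w)
  show ?case
  proof (cases "w = []")
    case True then show ?thesis using snoc by simp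
  next
    case False
    then have "rees_mult n P (word_eval n P phi w) (phi b) = Some (i, g, l)"
      using snoc eval_snoc by metis
    then show ?thesis using mult_some_right by fastforce
  qed
qed

lemma eval_snoc_none:
  assumes "w \<noteq> []"
  shows "word_eval n P phi (w @ [b]) = None \<longleftrightarrow>
     word_eval n P phi w = None \<or> rees_mult n P (phi (last w)) (phi b) = None"
proof (cases "word_eval n P phi w")
  case None
  have "word_eval n P phi (w @ [b]) = rees_mult n P None (phi b)"
    using eval_snoc[OF assms, of n P phi b] None by simp
  then show ?thesis using None by simp
next
  case (Some x)
  then obtain i g l where x: "word_eval n P phi w = Some (i, g, l)" by (cases x) auto
  then obtain i' g' where l: "phi (last w) = Some (i', g', l)" using eval_last[OF assms x] by blast
  have "word_eval n P phi (w @ [b]) = rees_mult n P (Some (i, g, l)) (phi b)"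
    using eval_snoc[OF assms, of n P phi b] x by simp
  then show ?thesis using x l mult_step[of n P i g l "phi b" i' g'] by simp
qed

lemma pair_snoc:
  "(\<exists>u a c v. w @ [b] = u @ a # c # v \<and> Q a c) \<longleftrightarrow>
   (\<exists>u a c v. w = u @ a # c # v \<and> Q a c) \<or> (w \<noteq> [] \<and> Q (last w) b)"
proof
  assume "\<exists>u a c v. w @ [b] = u @ a # c # v \<and> Q a c"
  then obtain u a c v where h: "w @ [b] = u @ a # c # v" "Q a c" by blast
  show "(\<exists>u a c v. w = u @ a # c # v \<and> Q a c) \<or> (w \<noteq> [] \<and> Q (last w) b)"
  proof (cases v rule: rev_exhaust)
    case Nil
    then have "w @ [b] = (u @ [a]) @ [c]" using h by simp
    then have "w = u @ [a]" "b = c" by auto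
    then show ?thesis using h by simp
  next
    case (snoc v' x)
    then have "w @ [b] = (u @ a # c # v') @ [x]" using h by simp
    then have "w = u @ a # c # v'" by blast
    then show ?thesis using h by blast
  qed
next
  assume "(\<exists>u a c v. w = u @ a # c # v \<and> Q a c) \<or> (w \<noteq> [] \<and> Q (last w) b)"
  then show "\<exists>u a c v. w @ [b] = u @ a # c # v \<and> Q a c"
  proof
    assume "\<exists>u a c v. w = u @ a # c # v \<and> Q a c"
    then obtain u a c v where "w = u @ a # c # v" "Q a c" by blast
    then show ?thesis by (intro exI[of _ u] exI[of _ a] exI[of _ c] exI[of _ "v @ [b]"]) simp
  next
    assume h: "w \<noteq> [] \<and> Q (last w) b"
    then have "w @ [b] = butlast w @ last w # b # []" by simp
    then show ?thesis using h by blast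
  qed
qed

definition badw :: "nat \<Rightarrow> ('l \<Rightarrow> 'i \<Rightarrow> nat option) \<Rightarrow> ('a \<Rightarrow> ('i, 'l) rees_elt) \<Rightarrow> 'a list \<Rightarrow> bool" where
  "badw n P phi w \<longleftrightarrow> (\<exists>x\<in>set w. phi x = None) \<or>
     (\<exists>u a c v. w = u @ a # c # v \<and> rees_mult n P (phi a) (phi c) = None)"

lemma eval_none_iff:
  "w \<noteq> [] \<Longrightarrow> word_eval n P phi w = None \<longleftrightarrow> badw n P phi w"
proof (induction w rule: rev_induct)
  case Nil then show ?case by simp
next
  case (snoc b w)
  show ?case
  proof (cases "w = []")
    case True
    then show ?thesis unfolding badw_def by auto
  next
    case False
    have "badw n P phi (w @ [b]) \<longleftrightarrow> badw n P phi w \<or> phi b = None \<or>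
        rees_mult n P (phi (last w)) (phi b) = None"
      unfolding badw_def using pair_snoc[of w b "\<lambda>a c. rees_mult n P (phi a) (phi c) = None"] False
      by auto
    also have "\<dots> \<longleftrightarrow> badw n P phi w \<or> rees_mult n P (phi (last w)) (phi b) = None"
      by auto
    finally show ?thesis using eval_snoc_none[OF False, of n P phi b] snoc.IH[OF False] by simp
  qed
qed

definition UU :: "'a gre" where "UU = GCompl GEmpty"

lemma UU_lang[simp]: "gre_lang A UU = lists A" by (simp add: UU_def)

definition f1 :: "'a \<Rightarrow> 'a gre" where "f1 a = GConc UU (GConc (GLetter a) UU)"
definition f2 :: "'a \<Rightarrow> 'a \<Rightarrow> 'a gre" where "f2 a b = GConc UU (GConc (GLetter a) (GConc (GLetter b) UU))"

lemma f1_lang: "gre_lang A (f1 a) = {u @ a # v | u v. u \<in> lists A \<and> v \<in> lists A}"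
proof -
  have "gre_lang A (f1 a) = lang_conc (lists A) (lang_conc {[a]} (lists A))" by (simp add: f1_def)
  also have "lang_conc {[a]} (lists A) = {a # v | v. v \<in> lists A}" unfolding lang_conc_def by auto
  also have "lang_conc (lists A) {a # v | v. v \<in> lists A} = {u @ a # v | u v. u \<in> lists A \<and> v \<in> lists A}"
    unfolding lang_conc_def by blast
  finally show ?thesis .
qed

lemma f2_lang: "gre_lang A (f2 a b) = {u @ a # b # v | u v. u \<in> lists A \<and> v \<in> lists A}"
proof -
  have "gre_lang A (f2 a b) = lang_conc (lists A) (lang_conc {[a]} (lang_conc {[b]} (lists A)))" by (simp add: f2_def)
  also have "lang_conc {[b]} (lists A) = {b # v | v. v \<in> lists A}" unfolding lang_conc_def by auto
  also have "lang_conc {[a]} {b # v | v. v \<in> lists A} = {a # b # v | v. v \<in> lists A}" unfolding lang_conc_def by auto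
  also have "lang_conc (lists A) {a # b # v | v. v \<in> lists A} = {u @ a # b # v | u v. u \<in> lists A \<and> v \<in> lists A}"
    unfolding lang_conc_def by blast
  finally show ?thesis .
qed

lemma union_props:
  "gre_lang A (foldr GUnion Es GEmpty) = (\<Union>E\<in>set Es. gre_lang A E)"
  "(\<forall>E\<in>set Es. gre_over A E) \<Longrightarrow> gre_over A (foldr GUnion Es GEmpty)"
  "(\<forall>E\<in>set Es. star_height E = 0) \<Longrightarrow> star_height (foldr GUnion Es GEmpty) = 0"
  by (induction Es) auto

theorem lemma3p1:
  fixes n :: nat and I :: "'i set" and L :: "'l set"
    and P :: "'l \<Rightarrow> 'i \<Rightarrow> nat option"
    and A :: "'a set" and phi :: "'a \<Rightarrow> ('i, 'l) rees_elt"
  assumes "n \<ge> 1" and "I \<noteq> {}" and "L \<noteq> {}"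
    and "sandwich_ok n I L P"
    and "finite A"
    and "\<forall>a\<in>A. phi a \<in> rees_carrier n I L"
  shows "\<exists>E. gre_over A E \<and> star_height E = 0 \<and>
      gre_lang A E = {w \<in> lists A. w \<noteq> [] \<and> word_eval n P phi w = None}"
proof -
  obtain as where as: "set as = A" using finite_list assms(5) by blast
  define Es where "Es = [f1 a. a \<leftarrow> as, phi a = None] @
      [f2 a b. a \<leftarrow> as, b \<leftarrow> as, rees_mult n P (phi a) (phi b) = None]"
  define E where "E = foldr GUnion Es GEmpty"
  have over: "gre_over A E" unfolding E_def
    by (rule union_props(2)) (auto simp: Es_def f1_def f2_def UU_def as)
  have sh: "star_height E = 0" unfolding E_def
    by (rule union_props(3)) (auto simp: Es_def f1_def f2_def UU_def)
  have "gre_lang A E = {w \<in> lists A. w \<noteq> [] \<and> badw n P phi w}"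
  proof -
    have "gre_lang A E = (\<Union>a\<in>{a\<in>A. phi a = None}. gre_lang A (f1 a)) \<union>
        (\<Union>(a,b)\<in>{(a,b). a\<in>A \<and> b\<in>A \<and> rees_mult n P (phi a) (phi b) = None}. gre_lang A (f2 a b))"
      unfolding E_def union_props(1) Es_def using as by auto
    also have "\<dots> = {w \<in> lists A. w \<noteq> [] \<and> badw n P phi w}"
    proof (intro equalityI subsetI)
      fix w assume "w \<in> (\<Union>a\<in>{a\<in>A. phi a = None}. gre_lang A (f1 a)) \<union>
        (\<Union>(a,b)\<in>{(a,b). a\<in>A \<and> b\<in>A \<and> rees_mult n P (phi a) (phi b) = None}. gre_lang A (f2 a b))"
      then show "w \<in> {w \<in> lists A. w \<noteq> [] \<and> badw n P phi w}"
        unfolding f1_lang f2_lang badw_def by fastforce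
    next
      fix w assume w: "w \<in> {w \<in> lists A. w \<noteq> [] \<and> badw n P phi w}"
      show "w \<in> (\<Union>a\<in>{a\<in>A. phi a = None}. gre_lang A (f1 a)) \<union>
        (\<Union>(a,b)\<in>{(a,b). a\<in>A \<and> b\<in>A \<and> rees_mult n P (phi a) (phi b) = None}. gre_lang A (f2 a b))"
      proof (cases "\<exists>x\<in>set w. phi x = None")
        case True
        then obtain x where x: "x \<in> set w" "phi x = None" by blast
        then obtain u v where "w = u @ x # v" by (metis split_list)
        then show ?thesis using w x unfolding f1_lang by auto
      next
        case False
        then obtain u a c v where uv: "w = u @ a # c # v" "rees_mult n P (phi a) (phi c) = None"
          using w unfolding badw_def by blast
        then have "w \<in> gre_lang A (f2 a c)" using w unfolding f2_lang by auto
        moreover have "a \<in> A" "c \<in> A" using w uv by auto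
        ultimately show ?thesis using uv by blast
      qed
    qed
    finally show ?thesis .
  qed
  also have "\<dots> = {w \<in> lists A. w \<noteq> [] \<and> word_eval n P phi w = None}"
    using eval_none_iff by blast
  finally show ?thesis using over sh by blast
qed

end
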